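(* Assume $f$ is Lipschitz and satisfies $\mathbf{(AP)_b}$ with $\lambda_1<b<B$. Then $\tilde h(z,t)\to-\infty$ as $|t|\to\infty$, uniformly in $z\in Z$.
   Context: Let $\Omega\subset\mathbb{R}^n$ be a bounded domain with $C^{1,1}$ boundary. Let $Lu=\mathrm{tr}(A(x)D^2u)+b(x)\cdot\nabla u+c(x)u$, where $A\in C(\overline\Omega)$ is symmetric-matrix valued with eigenvalues in $[\lambda,\Lambda]$, $\Lambda\ge\lambda>0$, and $|b|,|c|\le\Lambda$. Fix $p\ge n$, $X=\{u\in W^{2,p}(\Omega):u=0\text{ on }\partial\Omega\}$, $Y=L^p(\Omega)$. $\lambda_1=\sup\{\mu:\exists\,\phi\in W^{2,n}_{\rm loc}(\Omega),\phi>0,(L+\mu)\phi\le0\}$ is the principal (simple) Dirichlet eigenvalue of $-L$ with eigenfunction $\phi_1\in X$, $\phi_1>0$; the adjoint $L^*$ has the same principal eigenvalue with positive eigenfunction $\phi_1^*$; $\langle g,h\rangle=\int_\Omega gh$. $Z=\{g\in Y:\langle g,\phi_1^*\rangle=0\}$, $W=Z\cap X$; $P:Y=Z\oplus\mathbb{R}\phi_1\to Z$, $P(z+s\phi_1)=z$. $F(u)=-Lu-f(u)$. Condition $\mathbf{(AP)_b}$ (lower slope normalized to $a=0$, so $0<\lambda_1<b$): $0\le\frac{f(x)-f(y)}{x-y}\le b$ for $x\ne y$, and for some $M\ge0$, $f(s)\ge\max\{bs-M,-M\}$ for all $s$. $B=B(L,\Omega)>\lambda_1$ is a constant (depending only on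 $L,\Omega$) for which, whenever $\lambda_1<b<B$, the map $\Psi:X\to Y$, $\Psi(w+t\phi_1)=PF(w+t\phi_1)+t\phi_1$ ($w\in W$, $t\in\mathbb{R}$), is a bi-Lipschitz homeomorphism. The height function is $\tilde h(z,t)=\langle F(\Psi^{-1}(z+t\phi_1)),\phi_1^*\rangle/\langle\phi_1,\phi_1^*\rangle$ for $z\in Z$, $t\in\mathbb{R}$. *)

theory Defs
  imports "HOL-Analysis.Analysis"
begin

text \<open>Near every boundary point, after choosing a unit direction nu, the domain is the
  supergraph of a C^{1,1} function gamma over the hyperplane orthogonal to nu
  (gamma is evaluated only at the orthogonal projection onto that hyperplane).\<close>

definition C11_boundary :: "(real^'n) set \<Rightarrow> bool" where
  "C11_boundary \<Omega> \<longleftrightarrow>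
    (\<forall>x0\<in>frontier \<Omega>. \<exists>r>0. \<exists>\<nu> \<gamma> \<gamma>'.
       norm \<nu> = 1 \<and>
       (\<forall>y. (\<gamma> has_derivative \<gamma>' y) (at y)) \<and>
       (\<exists>K. \<forall>y z. onorm (\<lambda>v. \<gamma>' y v - \<gamma>' z v) \<le> K * dist y z) \<and>
       \<Omega> \<inter> ball x0 r = {y \<in> ball x0 r. y \<bullet> \<nu> > \<gamma> (y - (y \<bullet> \<nu>) *\<^sub>R \<nu>)})"

section \<open>Lebesgue and Sobolev spaces (functions are representatives)\<close>

definition pd :: "(real^'n \<Rightarrow> real) \<Rightarrow> 'n \<Rightarrow> real^'n \<Rightarrow> real" where
  "pd \<phi> i x = frechet_derivative \<phi> (at x) (axis i 1)"

definition test_fun :: "(real^'n) set \<Rightarrow> (real^'n \<Rightarrow> real) \<Rightarrow> bool" where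
  "test_fun \<Omega> \<phi> \<longleftrightarrow> (\<forall>x. \<phi> differentiable (at x)) \<and> (\<forall>i. continuous_on UNIV (pd \<phi> i)) \<and>
     (\<exists>K. compact K \<and> K \<subseteq> \<Omega> \<and> (\<forall>x. x \<notin> K \<longrightarrow> \<phi> x = 0))"

definition loc_int :: "(real^'n) set \<Rightarrow> (real^'n \<Rightarrow> real) \<Rightarrow> bool" where
  "loc_int \<Omega> u \<longleftrightarrow> (\<forall>K. compact K \<and> K \<subseteq> \<Omega> \<longrightarrow> set_integrable lebesgue K u)"

definition weak_pd :: "(real^'n) set \<Rightarrow> (real^'n \<Rightarrow> real) \<Rightarrow> 'n \<Rightarrow> (real^'n \<Rightarrow> real) \<Rightarrow> bool" where
  "weak_pd \<Omega> u i v \<longleftrightarrow> loc_int \<Omega> u \<and> loc_int \<Omega> v \<and>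
     (\<forall>\<phi>. test_fun \<Omega> \<phi> \<longrightarrow>
        (\<integral>x. u x * pd \<phi> i x \<partial>lebesgue_on \<Omega>) = - (\<integral>x. v x * \<phi> x \<partial>lebesgue_on \<Omega>))"

definition Lp :: "(real^'n) set \<Rightarrow> real \<Rightarrow> (real^'n \<Rightarrow> real) \<Rightarrow> bool" where
  "Lp \<Omega> p u \<longleftrightarrow> u \<in> borel_measurable (lebesgue_on \<Omega>) \<and>
     integrable (lebesgue_on \<Omega>) (\<lambda>x. \<bar>u x\<bar> powr p)"

definition Lp_norm :: "(real^'n) set \<Rightarrow> real \<Rightarrow> (real^'n \<Rightarrow> real) \<Rightarrow> real" where
  "Lp_norm \<Omega> p u = (\<integral>x. \<bar>u x\<bar> powr p \<partial>lebesgue_on \<Omega>) powr (1 / p)"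

definition grad_w :: "(real^'n) set \<Rightarrow> (real^'n \<Rightarrow> real) \<Rightarrow> 'n \<Rightarrow> real^'n \<Rightarrow> real" where
  "grad_w \<Omega> u = (SOME Du. \<forall>i. weak_pd \<Omega> u i (Du i))"

definition hess_w :: "(real^'n) set \<Rightarrow> (real^'n \<Rightarrow> real) \<Rightarrow> 'n \<Rightarrow> 'n \<Rightarrow> real^'n \<Rightarrow> real" where
  "hess_w \<Omega> u = (SOME D2u. \<forall>i j. weak_pd \<Omega> (grad_w \<Omega> u i) j (D2u i j))"

definition W2p :: "(real^'n) set \<Rightarrow> real \<Rightarrow> (real^'n \<Rightarrow> real) \<Rightarrow> bool" where
  "W2p \<Omega> p u \<longleftrightarrow> Lp \<Omega> p u \<and>
     (\<exists>Du D2u. \<forall>i. weak_pd \<Omega> u i (Du i) \<and> Lp \<Omega> p (Du i) \<and>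
        (\<forall>j. weak_pd \<Omega> (Du i) j (D2u i j) \<and> Lp \<Omega> p (D2u i j)))"

definition W2p_loc :: "(real^'n) set \<Rightarrow> real \<Rightarrow> (real^'n \<Rightarrow> real) \<Rightarrow> bool" where
  "W2p_loc \<Omega> p u \<longleftrightarrow>
     (\<exists>Du D2u. \<forall>i. weak_pd \<Omega> u i (Du i) \<and> (\<forall>j. weak_pd \<Omega> (Du i) j (D2u i j))) \<and>
     (\<forall>K. compact K \<and> K \<subseteq> \<Omega> \<longrightarrow> Lp K p u \<and>
        (\<forall>i. Lp K p (grad_w \<Omega> u i) \<and> (\<forall>j. Lp K p (hess_w \<Omega> u i j))))"

definition W2p_norm :: "(real^'n) set \<Rightarrow> real \<Rightarrow> (real^'n \<Rightarrow> real) \<Rightarrow> real" where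
  "W2p_norm \<Omega> p u = Lp_norm \<Omega> p u + (\<Sum>i\<in>UNIV. Lp_norm \<Omega> p (grad_w \<Omega> u i))
     + (\<Sum>i\<in>UNIV. \<Sum>j\<in>UNIV. Lp_norm \<Omega> p (hess_w \<Omega> u i j))"

text \<open>Zero boundary values: u lies in W^{1,p}_0, the closure of the test functions in W^{1,p}.\<close>
definition W1p0 :: "(real^'n) set \<Rightarrow> real \<Rightarrow> (real^'n \<Rightarrow> real) \<Rightarrow> bool" where
  "W1p0 \<Omega> p u \<longleftrightarrow> (\<exists>\<phi>s. (\<forall>k. test_fun \<Omega> (\<phi>s k)) \<and>
     (\<lambda>k. Lp_norm \<Omega> p (\<lambda>x. \<phi>s k x - u x)
          + (\<Sum>i\<in>UNIV. Lp_norm \<Omega> p (\<lambda>x. pd (\<phi>s k) i x - grad_w \<Omega> u i x))) \<longlonglongrightarrow> 0)"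

definition Xsp :: "(real^'n) set \<Rightarrow> real \<Rightarrow> (real^'n \<Rightarrow> real) set" where
  "Xsp \<Omega> p = {u. W2p \<Omega> p u \<and> W1p0 \<Omega> p u}"

definition Lop :: "(real^'n \<Rightarrow> real^'n^'n) \<Rightarrow> (real^'n \<Rightarrow> real^'n) \<Rightarrow> (real^'n \<Rightarrow> real)
    \<Rightarrow> (real^'n) set \<Rightarrow> (real^'n \<Rightarrow> real) \<Rightarrow> real^'n \<Rightarrow> real" where
  "Lop A b c \<Omega> u x = (\<Sum>i\<in>UNIV. \<Sum>j\<in>UNIV. A x $ i $ j * hess_w \<Omega> u i j x)
       + (\<Sum>i\<in>UNIV. b x $ i * grad_w \<Omega> u i x) + c x * u x"

definition principal_eig :: "(real^'n \<Rightarrow> real^'n^'n) \<Rightarrow> (real^'n \<Rightarrow> real^'n) \<Rightarrow> (real^'n \<Rightarrow> real)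
    \<Rightarrow> (real^'n) set \<Rightarrow> real" where
  "principal_eig A b c \<Omega> = Sup {\<mu>. \<exists>\<phi>. W2p_loc \<Omega> (real CARD('n)) \<phi> \<and> continuous_on \<Omega> \<phi> \<and>
       (\<forall>x\<in>\<Omega>. \<phi> x > 0) \<and>
       (AE x in lebesgue_on \<Omega>. Lop A b c \<Omega> \<phi> x + \<mu> * \<phi> x \<le> 0)}"

definition pair :: "(real^'n) set \<Rightarrow> (real^'n \<Rightarrow> real) \<Rightarrow> (real^'n \<Rightarrow> real) \<Rightarrow> real" where
  "pair \<Omega> g h = (\<integral>x. g x * h x \<partial>lebesgue_on \<Omega>)"

text \<open>Condition (AP)_b with lower slope a = 0.\<close>
definition AP_cond :: "real \<Rightarrow> (real \<Rightarrow> real) \<Rightarrow> bool" where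
  "AP_cond b f \<longleftrightarrow> (\<forall>x y. x \<noteq> y \<longrightarrow> 0 \<le> (f x - f y) / (x - y) \<and> (f x - f y) / (x - y) \<le> b) \<and>
     (\<exists>M\<ge>0. \<forall>s. f s \<ge> max (b * s - M) (- M))"

definition Fop :: "(real^'n \<Rightarrow> real^'n^'n) \<Rightarrow> (real^'n \<Rightarrow> real^'n) \<Rightarrow> (real^'n \<Rightarrow> real)
    \<Rightarrow> (real^'n) set \<Rightarrow> (real \<Rightarrow> real) \<Rightarrow> (real^'n \<Rightarrow> real) \<Rightarrow> real^'n \<Rightarrow> real" where
  "Fop A b c \<Omega> f u = (\<lambda>x. - Lop A b c \<Omega> u x - f (u x))"

text \<open>Coefficient of phi1 in the decomposition Y = Z (+) R phi1 (also X = W (+) R phi1).\<close>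
definition coef :: "(real^'n) set \<Rightarrow> (real^'n \<Rightarrow> real) \<Rightarrow> (real^'n \<Rightarrow> real) \<Rightarrow> (real^'n \<Rightarrow> real) \<Rightarrow> real" where
  "coef \<Omega> \<phi>1 \<phi>1s g = pair \<Omega> g \<phi>1s / pair \<Omega> \<phi>1 \<phi>1s"

definition Pproj :: "(real^'n) set \<Rightarrow> (real^'n \<Rightarrow> real) \<Rightarrow> (real^'n \<Rightarrow> real) \<Rightarrow> (real^'n \<Rightarrow> real) \<Rightarrow> real^'n \<Rightarrow> real" where
  "Pproj \<Omega> \<phi>1 \<phi>1s g = (\<lambda>x. g x - coef \<Omega> \<phi>1 \<phi>1s g * \<phi>1 x)"

text \<open>Psi(w + t phi1) = P F(w + t phi1) + t phi1, where t = coef u.\<close>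
definition Psi :: "(real^'n \<Rightarrow> real^'n^'n) \<Rightarrow> (real^'n \<Rightarrow> real^'n) \<Rightarrow> (real^'n \<Rightarrow> real)
    \<Rightarrow> (real^'n) set \<Rightarrow> (real \<Rightarrow> real) \<Rightarrow> (real^'n \<Rightarrow> real) \<Rightarrow> (real^'n \<Rightarrow> real)
    \<Rightarrow> (real^'n \<Rightarrow> real) \<Rightarrow> real^'n \<Rightarrow> real" where
  "Psi A b c \<Omega> f \<phi>1 \<phi>1s u =
     (\<lambda>x. Pproj \<Omega> \<phi>1 \<phi>1s (Fop A b c \<Omega> f u) x + coef \<Omega> \<phi>1 \<phi>1s u * \<phi>1 x)"

text \<open>Bi-Lipschitz homeomorphism from X (W^{2,p}-norm) onto Y = L^p (functions modulo a.e.).\<close>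
definition bilip_homeo :: "(real^'n) set \<Rightarrow> real \<Rightarrow> ((real^'n \<Rightarrow> real) \<Rightarrow> real^'n \<Rightarrow> real) \<Rightarrow> bool" where
  "bilip_homeo \<Omega> p \<Psi> \<longleftrightarrow>
     (\<forall>u\<in>Xsp \<Omega> p. Lp \<Omega> p (\<Psi> u)) \<and>
     (\<exists>k K. 0 < k \<and> (\<forall>u\<in>Xsp \<Omega> p. \<forall>v\<in>Xsp \<Omega> p.
         k * W2p_norm \<Omega> p (\<lambda>x. u x - v x) \<le> Lp_norm \<Omega> p (\<lambda>x. \<Psi> u x - \<Psi> v x) \<and>
         Lp_norm \<Omega> p (\<lambda>x. \<Psi> u x - \<Psi> v x) \<le> K * W2p_norm \<Omega> p (\<lambda>x. u x - v x))) \<and>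
     (\<forall>g. Lp \<Omega> p g \<longrightarrow> (\<exists>u\<in>Xsp \<Omega> p. AE x in lebesgue_on \<Omega>. \<Psi> u x = g x))"

definition Psi_inv :: "(real^'n) set \<Rightarrow> real \<Rightarrow> ((real^'n \<Rightarrow> real) \<Rightarrow> real^'n \<Rightarrow> real)
    \<Rightarrow> (real^'n \<Rightarrow> real) \<Rightarrow> real^'n \<Rightarrow> real" where
  "Psi_inv \<Omega> p \<Psi> g = (SOME u. u \<in> Xsp \<Omega> p \<and> (AE x in lebesgue_on \<Omega>. \<Psi> u x = g x))"

definition htilde :: "(real^'n \<Rightarrow> real^'n^'n) \<Rightarrow> (real^'n \<Rightarrow> real^'n) \<Rightarrow> (real^'n \<Rightarrow> real)
    \<Rightarrow> (real^'n) set \<Rightarrow> real \<Rightarrow> (real \<Rightarrow> real) \<Rightarrow> (real^'n \<Rightarrow> real) \<Rightarrow> (real^'n \<Rightarrow> real)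
    \<Rightarrow> (real^'n \<Rightarrow> real) \<Rightarrow> real \<Rightarrow> real" where
  "htilde A b c \<Omega> p f \<phi>1 \<phi>1s z t =
     pair \<Omega> (Fop A b c \<Omega> f (Psi_inv \<Omega> p (Psi A b c \<Omega> f \<phi>1 \<phi>1s) (\<lambda>x. z x + t * \<phi>1 x))) \<phi>1s
       / pair \<Omega> \<phi>1 \<phi>1s"

definition Zsp :: "(real^'n) set \<Rightarrow> real \<Rightarrow> (real^'n \<Rightarrow> real) \<Rightarrow> (real^'n \<Rightarrow> real) set" where
  "Zsp \<Omega> p \<phi>1s = {g. Lp \<Omega> p g \<and> pair \<Omega> g \<phi>1s = 0}"

end

theory Submission
  imports Defs
begin


lemma Lp_add:
  assumes "Lp S p g" "Lp S p h" "0 < p"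
  shows "Lp S p (\<lambda>x. g x + h x)"
proof -
  have mg: "g \<in> borel_measurable (lebesgue_on S)" and mh: "h \<in> borel_measurable (lebesgue_on S)"
    and ig: "integrable (lebesgue_on S) (\<lambda>x. \<bar>g x\<bar> powr p)"
    and ih: "integrable (lebesgue_on S) (\<lambda>x. \<bar>h x\<bar> powr p)"
    using assms unfolding Lp_def by auto
  have bnd: "\<bar>g x + h x\<bar> powr p \<le> 2 powr p * (\<bar>g x\<bar> powr p + \<bar>h x\<bar> powr p)" for x
  proof -
    have "\<bar>g x + h x\<bar> \<le> 2 * max \<bar>g x\<bar> \<bar>h x\<bar>" by linarith
    then have "\<bar>g x + h x\<bar> powr p \<le> (2 * max \<bar>g x\<bar> \<bar>h x\<bar>) powr p"
      using assms(3) by (intro powr_mono2) auto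
    also have "\<dots> = 2 powr p * max \<bar>g x\<bar> \<bar>h x\<bar> powr p"
      by (simp add: powr_mult)
    also have "max \<bar>g x\<bar> \<bar>h x\<bar> powr p \<le> \<bar>g x\<bar> powr p + \<bar>h x\<bar> powr p"
      by (cases "\<bar>g x\<bar> \<le> \<bar>h x\<bar>") (auto simp: max_def)
    finally show ?thesis by (simp add: mult_left_mono)
  qed
  have "integrable (lebesgue_on S) (\<lambda>x. 2 powr p * (\<bar>g x\<bar> powr p + \<bar>h x\<bar> powr p))"
    using ig ih by auto
  then have "integrable (lebesgue_on S) (\<lambda>x. \<bar>g x + h x\<bar> powr p)"
  proof (rule Bochner_Integration.integrable_bound)
    show "(\<lambda>x. \<bar>g x + h x\<bar> powr p) \<in> borel_measurable (lebesgue_on S)"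
      using mg mh by measurable
    show "AE x in lebesgue_on S. norm (\<bar>g x + h x\<bar> powr p)
        \<le> norm (2 powr p * (\<bar>g x\<bar> powr p + \<bar>h x\<bar> powr p))"
    proof (intro AE_I2)
      fix x
      have "0 \<le> 2 powr p * (\<bar>g x\<bar> powr p + \<bar>h x\<bar> powr p)" by simp
      then show "norm (\<bar>g x + h x\<bar> powr p)
        \<le> norm (2 powr p * (\<bar>g x\<bar> powr p + \<bar>h x\<bar> powr p))"
        using bnd[of x] by simp
    qed
  qed
  then show ?thesis using mg mh unfolding Lp_def by auto
qed

lemma Lp_scale:
  assumes "Lp S p h"
  shows "Lp S p (\<lambda>x. t * h x)"
proof -
  have mh: "h \<in> borel_measurable (lebesgue_on S)"
    and ih: "integrable (lebesgue_on S) (\<lambda>x. \<bar>h x\<bar> powr p)"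
    using assms unfolding Lp_def by auto
  have "(\<lambda>x. \<bar>t * h x\<bar> powr p) = (\<lambda>x. \<bar>t\<bar> powr p * \<bar>h x\<bar> powr p)"
    by (simp add: abs_mult powr_mult)
  moreover have "integrable (lebesgue_on S) (\<lambda>x. \<bar>t\<bar> powr p * \<bar>h x\<bar> powr p)"
    using ih by auto
  ultimately show ?thesis using mh unfolding Lp_def by auto
qed

theorem proposition2p12:
  fixes \<Omega> :: "(real^'n) set"
    and A :: "real^'n \<Rightarrow> real^'n^'n" and bv :: "real^'n \<Rightarrow> real^'n" and c :: "real^'n \<Rightarrow> real"
    and lam \<Lambda> p b B :: real and f :: "real \<Rightarrow> real"
    and \<phi>1 \<phi>1s :: "real^'n \<Rightarrow> real"
  assumes dom: "open \<Omega>" "bounded \<Omega>" "connected \<Omega>" "\<Omega> \<noteq> {}" "C11_boundary \<Omega>"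
    and A_cont: "continuous_on (closure \<Omega>) A"
    and A_sym: "\<forall>x\<in>closure \<Omega>. transpose (A x) = A x"
    and ell: "0 < lam" "lam \<le> \<Lambda>"
      "\<forall>x\<in>closure \<Omega>. \<forall>\<xi>. lam * (\<xi> \<bullet> \<xi>) \<le> \<xi> \<bullet> (A x *v \<xi>) \<and> \<xi> \<bullet> (A x *v \<xi>) \<le> \<Lambda> * (\<xi> \<bullet> \<xi>)"
    and coeffs: "bv \<in> borel_measurable (lebesgue_on \<Omega>)" "c \<in> borel_measurable (lebesgue_on \<Omega>)"
      "\<forall>x\<in>\<Omega>. norm (bv x) \<le> \<Lambda> \<and> \<bar>c x\<bar> \<le> \<Lambda>"
    and p: "p \<ge> real CARD('n)"
    and eig: "\<phi>1 \<in> Xsp \<Omega> p" "continuous_on \<Omega> \<phi>1" "\<forall>x\<in>\<Omega>. \<phi>1 x > 0"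
      "AE x in lebesgue_on \<Omega>. Lop A bv c \<Omega> \<phi>1 x + principal_eig A bv c \<Omega> * \<phi>1 x = 0"
    and adj: "\<phi>1s \<in> borel_measurable (lebesgue_on \<Omega>)"
      "AE x in lebesgue_on \<Omega>. \<phi>1s x > 0"
      "\<forall>g. Lp \<Omega> p g \<longrightarrow> integrable (lebesgue_on \<Omega>) (\<lambda>x. g x * \<phi>1s x)"
      "\<forall>u\<in>Xsp \<Omega> p. pair \<Omega> (\<lambda>x. Lop A bv c \<Omega> u x + principal_eig A bv c \<Omega> * u x) \<phi>1s = 0"
    and l1pos: "0 < principal_eig A bv c \<Omega>"
    and B: "\<forall>b' g. principal_eig A bv c \<Omega> < b' \<and> b' < B \<and> AP_cond b' g \<longrightarrow>
              bilip_homeo \<Omega> p (Psi A bv c \<Omega> g \<phi>1 \<phi>1s)"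
    and f_lip: "\<exists>K. \<forall>x y. \<bar>f x - f y\<bar> \<le> K * \<bar>x - y\<bar>"
    and AP: "AP_cond b f"
    and b: "principal_eig A bv c \<Omega> < b" "b < B"
  shows "\<forall>K. \<exists>T. \<forall>z\<in>Zsp \<Omega> p \<phi>1s. \<forall>t. \<bar>t\<bar> \<ge> T \<longrightarrow>
           htilde A bv c \<Omega> p f \<phi>1 \<phi>1s z t \<le> - K"
proof -
  let ?M = "lebesgue_on \<Omega>"
  let ?l = "principal_eig A bv c \<Omega>"
  let ?\<Psi> = "Psi A bv c \<Omega> f \<phi>1 \<phi>1s"
  define P where "P = pair \<Omega> \<phi>1 \<phi>1s"
  define I where "I = integral\<^sup>L ?M \<phi>1s"
  have p0: "0 < p"
    using p by (metis of_nat_0_less_iff zero_less_card_finite less_le_trans)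
  have bil: "bilip_homeo \<Omega> p ?\<Psi>" using B AP b by blast
  obtain M where M: "M \<ge> 0" "\<And>s. f s \<ge> max (b * s - M) (- M)"
    using AP unfolding AP_cond_def by blast
  have slope: "\<bar>f x - f y\<bar> \<le> b * \<bar>x - y\<bar>" for x y
  proof (cases "x = y")
    case False
    then have "0 \<le> (f x - f y) / (x - y)" "(f x - f y) / (x - y) \<le> b"
      using AP False unfolding AP_cond_def by blast+
    then have "\<bar>f x - f y\<bar> / \<bar>x - y\<bar> \<le> b" by (metis abs_divide abs_of_nonneg)
    then show ?thesis using False by (simp add: divide_le_eq)
  qed simp
  have lmeas: "\<Omega> \<in> lmeasurable"
    using lmeasurable_interior[OF dom(2)] interior_open[OF dom(1)] by simp
  have fin: "finite_measure ?M" using finite_measure_lebesgue_on[OF lmeas] .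
  have Lp1: "Lp \<Omega> p (\<lambda>x. 1)"
  proof -
    have "integrable ?M (\<lambda>x. 1::real)"
      using fin finite_measure.integrable_const by blast
    then show ?thesis unfolding Lp_def by simp
  qed
  have Lpphi: "Lp \<Omega> p \<phi>1" using eig(1) unfolding Xsp_def W2p_def by auto
  have intphi: "integrable ?M (\<lambda>x. \<phi>1 x * \<phi>1s x)" using adj(3) Lpphi by blast
  have intI: "integrable ?M \<phi>1s" using adj(3) Lp1 by auto
  have Ppos: "P > 0"
  proof -
    have "emeasure ?M (space ?M) \<noteq> 0"
    proof
      assume h0: "emeasure ?M (space ?M) = 0"
      obtain x where "x \<in> \<Omega>" using dom(4) by blast
      then obtain e where e: "e > 0" "ball x e \<subseteq> \<Omega>"
        using dom(1) open_contains_ball by blast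
      have Os: "\<Omega> \<in> sets lebesgue" using lmeas by (simp add: fmeasurable_def)
      then have "emeasure ?M \<Omega> = emeasure lebesgue \<Omega>"
        by (simp add: emeasure_restrict_space)
      then have "emeasure lebesgue \<Omega> = 0" using h0 by simp
      then have "emeasure lebesgue (ball x e) = 0"
        using e(2) Os by (metis emeasure_mono le_zero_eq)
      then have "measure lebesgue (ball x e) = 0" by (simp add: measure_def)
      moreover have "measure lebesgue (ball x e) = measure lborel (ball x e)" by simp
      ultimately show False using content_ball_pos[OF e(1), of x] by simp
    qed
    moreover have "AE x in ?M. 0 < \<phi>1 x * \<phi>1s x"
    proof -
      have "AE x in ?M. x \<in> \<Omega>" using AE_space[of ?M] by simp
      with adj(2) show ?thesis by eventually_elim (use eig(3) in auto)
    qed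
    ultimately have "integral\<^sup>L ?M (\<lambda>x. 0) < integral\<^sup>L ?M (\<lambda>x. \<phi>1 x * \<phi>1s x)"
      by (intro finite_measure.integral_less_AE_space[OF fin]) (use intphi in auto)
    then show ?thesis unfolding P_def pair_def by simp
  qed
  have Ige: "I \<ge> 0"
    unfolding I_def using adj(2) by (intro integral_nonneg_AE) (auto elim: AE_mp)
  have key: "htilde A bv c \<Omega> p f \<phi>1 \<phi>1s z t * P \<le> ?l * t * P - (b * t * P - M * I)
      \<and> htilde A bv c \<Omega> p f \<phi>1 \<phi>1s z t * P \<le> ?l * t * P - (- M * I)"
    if z: "z \<in> Zsp \<Omega> p \<phi>1s" for z t
  proof -
    have Lpz: "Lp \<Omega> p z" and z0: "pair \<Omega> z \<phi>1s = 0" using z unfolding Zsp_def by auto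
    define h where "h = (\<lambda>x. z x + t * \<phi>1 x)"
    have Lph: "Lp \<Omega> p h" unfolding h_def using Lp_add[OF Lpz Lp_scale[OF Lpphi] p0] .
    obtain u0 where u0: "u0 \<in> Xsp \<Omega> p" "AE x in ?M. ?\<Psi> u0 x = h x"
      using bil Lph unfolding bilip_homeo_def by blast
    define u where "u = Psi_inv \<Omega> p ?\<Psi> h"
    have u: "u \<in> Xsp \<Omega> p \<and> (AE x in ?M. ?\<Psi> u x = h x)"
      unfolding u_def Psi_inv_def by (rule someI[of _ u0]) (use u0 in auto)
    define g where "g = Fop A bv c \<Omega> f u"
    define a where "a = coef \<Omega> \<phi>1 \<phi>1s g"
    define s where "s = coef \<Omega> \<phi>1 \<phi>1s u"
    have ht: "htilde A bv c \<Omega> p f \<phi>1 \<phi>1s z t = pair \<Omega> g \<phi>1s / P"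
      unfolding htilde_def u_def h_def P_def g_def by simp
    have Psiu: "?\<Psi> u x = g x - a * \<phi>1 x + s * \<phi>1 x" for x
      unfolding Psi_def Pproj_def g_def a_def s_def by simp
    have LpPsi: "Lp \<Omega> p (?\<Psi> u)" using bil u unfolding bilip_homeo_def by blast
    have iPsi: "integrable ?M (\<lambda>x. ?\<Psi> u x * \<phi>1s x)" using adj(3) LpPsi by blast
    have Lpu: "Lp \<Omega> p u" using u unfolding Xsp_def W2p_def by auto
    have iu: "integrable ?M (\<lambda>x. u x * \<phi>1s x)" using adj(3) Lpu by blast
    have iz: "integrable ?M (\<lambda>x. z x * \<phi>1s x)" using adj(3) Lpz by blast
    have ih: "integrable ?M (\<lambda>x. h x * \<phi>1s x)" using adj(3) Lph by blast
    have gx: "(\<lambda>x. g x * \<phi>1s x) = (\<lambda>x. ?\<Psi> u x * \<phi>1s x + (a - s) * (\<phi>1 x * \<phi>1s x))"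
    proof
      fix x show "g x * \<phi>1s x = ?\<Psi> u x * \<phi>1s x + (a - s) * (\<phi>1 x * \<phi>1s x)"
        unfolding Psiu[of x] by (simp add: algebra_simps)
    qed
    have ig: "integrable ?M (\<lambda>x. g x * \<phi>1s x)" unfolding gx using iPsi intphi by auto
    have pg: "pair \<Omega> g \<phi>1s = pair \<Omega> (?\<Psi> u) \<phi>1s + (a - s) * P"
      unfolding pair_def P_def gx using iPsi intphi by simp
    have a_eq: "a = pair \<Omega> g \<phi>1s / P" unfolding a_def coef_def P_def by simp
    have pPsi: "pair \<Omega> (?\<Psi> u) \<phi>1s = s * P"
      using pg a_eq Ppos by (simp add: field_simps)
    have "pair \<Omega> (?\<Psi> u) \<phi>1s = integral\<^sup>L ?M (\<lambda>x. h x * \<phi>1s x)"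
      unfolding pair_def
    proof (rule integral_cong_AE)
      show "(\<lambda>x. ?\<Psi> u x * \<phi>1s x) \<in> borel_measurable ?M"
        using iPsi by (rule borel_measurable_integrable)
      show "(\<lambda>x. h x * \<phi>1s x) \<in> borel_measurable ?M"
        using ih by (rule borel_measurable_integrable)
      from conjunct2[OF u] show "AE x in ?M. ?\<Psi> u x * \<phi>1s x = h x * \<phi>1s x"
        by eventually_elim simp
    qed
    also have "(\<lambda>x. h x * \<phi>1s x) = (\<lambda>x. z x * \<phi>1s x + t * (\<phi>1 x * \<phi>1s x))"
      unfolding h_def by (simp add: algebra_simps)
    also have "integral\<^sup>L ?M \<dots> = pair \<Omega> z \<phi>1s + t * P"
      unfolding pair_def P_def using iz intphi by simp
    finally have "s * P = t * P" using z0 pPsi by simp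
    then have st: "s = t" using Ppos by simp
    have pu: "pair \<Omega> u \<phi>1s = t * P"
    proof -
      have e: "pair \<Omega> u \<phi>1s / P = t" using st unfolding s_def coef_def P_def .
      have "pair \<Omega> u \<phi>1s = (pair \<Omega> u \<phi>1s / P) * P" using Ppos by simp
      then show ?thesis unfolding e .
    qed
    have monof: "mono f"
    proof (rule monoI)
      fix x y :: real assume "x \<le> y"
      show "f x \<le> f y"
      proof (cases "x = y")
        case False
        then have yx: "y \<noteq> x" by simp
        have "0 \<le> (f y - f x) / (y - x)" using AP yx unfolding AP_cond_def by blast
        then show ?thesis using \<open>x \<le> y\<close> yx by (simp add: zero_le_divide_iff)
      qed simp
    qed
    have mu: "u \<in> borel_measurable ?M" using Lpu unfolding Lp_def by simp
    have mfu: "(\<lambda>x. f (u x) * \<phi>1s x) \<in> borel_measurable ?M"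
    proof -
      have "(\<lambda>x. f (u x)) \<in> borel_measurable ?M"
        using measurable_compose[OF mu borel_measurable_mono[OF monof]] by (simp add: o_def)
      then show ?thesis using adj(1) by (rule borel_measurable_times)
    qed
    have ifu: "integrable ?M (\<lambda>x. f (u x) * \<phi>1s x)"
    proof (rule Bochner_Integration.integrable_bound)
      show "integrable ?M (\<lambda>x. \<bar>f 0\<bar> * \<bar>\<phi>1s x\<bar> + b * \<bar>u x * \<phi>1s x\<bar>)"
        using intI iu by auto
      show "AE x in ?M. norm (f (u x) * \<phi>1s x) \<le> norm (\<bar>f 0\<bar> * \<bar>\<phi>1s x\<bar> + b * \<bar>u x * \<phi>1s x\<bar>)"
      proof (intro AE_I2)
        fix x
        have "\<bar>f (u x)\<bar> \<le> \<bar>f 0\<bar> + b * \<bar>u x\<bar>" using slope[of "u x" 0] by simp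
        then have "\<bar>f (u x)\<bar> * \<bar>\<phi>1s x\<bar> \<le> (\<bar>f 0\<bar> + b * \<bar>u x\<bar>) * \<bar>\<phi>1s x\<bar>"
          by (simp add: mult_right_mono)
        moreover have "0 \<le> \<bar>f 0\<bar> * \<bar>\<phi>1s x\<bar> + b * \<bar>u x * \<phi>1s x\<bar>"
          using b l1pos by simp
        ultimately show "norm (f (u x) * \<phi>1s x) \<le> norm (\<bar>f 0\<bar> * \<bar>\<phi>1s x\<bar> + b * \<bar>u x * \<phi>1s x\<bar>)"
          by (simp add: abs_mult algebra_simps)
      qed
    qed (rule mfu)
    define J where "J = integral\<^sup>L ?M (\<lambda>x. f (u x) * \<phi>1s x)"
    have Lx: "(\<lambda>x. (Lop A bv c \<Omega> u x + ?l * u x) * \<phi>1s x)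
        = (\<lambda>x. - (g x * \<phi>1s x) - f (u x) * \<phi>1s x + ?l * (u x * \<phi>1s x))"
      unfolding g_def Fop_def by (simp add: algebra_simps)
    have "0 = pair \<Omega> (\<lambda>x. Lop A bv c \<Omega> u x + ?l * u x) \<phi>1s"
      using adj(4) u by simp
    also have "\<dots> = - pair \<Omega> g \<phi>1s - J + ?l * (t * P)"
      unfolding pair_def Lx J_def using ig ifu iu pu unfolding pair_def by simp
    finally have pgJ: "pair \<Omega> g \<phi>1s = ?l * t * P - J" by simp
    have J1: "b * t * P - M * I \<le> J"
    proof -
      have "integral\<^sup>L ?M (\<lambda>x. b * (u x * \<phi>1s x) - M * \<phi>1s x) \<le> J"
        unfolding J_def
      proof (rule integral_mono_AE)
        show "integrable ?M (\<lambda>x. b * (u x * \<phi>1s x) - M * \<phi>1s x)" using iu intI by auto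
        show "integrable ?M (\<lambda>x. f (u x) * \<phi>1s x)" by (rule ifu)
        show "AE x in ?M. b * (u x * \<phi>1s x) - M * \<phi>1s x \<le> f (u x) * \<phi>1s x"
          using adj(2)
        proof eventually_elim
          case (elim x)
          have "b * u x - M \<le> f (u x)" using M(2)[of "u x"] by simp
          then have "(b * u x - M) * \<phi>1s x \<le> f (u x) * \<phi>1s x"
            using elim by (simp add: mult_right_mono)
          then show ?case by (simp add: algebra_simps)
        qed
      qed
      moreover have "integral\<^sup>L ?M (\<lambda>x. b * (u x * \<phi>1s x) - M * \<phi>1s x) = b * t * P - M * I"
        using iu intI pu unfolding pair_def I_def by simp
      ultimately show ?thesis by simp
    qed
    have J2: "- M * I \<le> J"
    proof -
      have "integral\<^sup>L ?M (\<lambda>x. - M * \<phi>1s x) \<le> J"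
        unfolding J_def
      proof (rule integral_mono_AE)
        show "integrable ?M (\<lambda>x. - M * \<phi>1s x)" using intI by auto
        show "integrable ?M (\<lambda>x. f (u x) * \<phi>1s x)" by (rule ifu)
        show "AE x in ?M. - M * \<phi>1s x \<le> f (u x) * \<phi>1s x"
          using adj(2)
        proof eventually_elim
          case (elim x)
          have "- M \<le> f (u x)" using M(2)[of "u x"] by simp
          then have "- M * \<phi>1s x \<le> f (u x) * \<phi>1s x"
            using elim by (intro mult_right_mono) auto
          then show ?case by simp
        qed
      qed
      moreover have "integral\<^sup>L ?M (\<lambda>x. - M * \<phi>1s x) = - M * I"
        unfolding I_def by simp
      ultimately show ?thesis using I_def by simp
    qed
    have "htilde A bv c \<Omega> p f \<phi>1 \<phi>1s z t * P = pair \<Omega> g \<phi>1s"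
      using ht Ppos by simp
    then show ?thesis using pgJ J1 J2 by simp
  qed
  show ?thesis
  proof
    fix K :: real
    define C where "C = M * I / P"
    have CP: "C * P = M * I" using Ppos by (simp add: C_def)
    define T where "T = max ((K + C) / (b - ?l)) ((K + C) / ?l)"
    show "\<exists>T. \<forall>z\<in>Zsp \<Omega> p \<phi>1s. \<forall>t. \<bar>t\<bar> \<ge> T \<longrightarrow>
           htilde A bv c \<Omega> p f \<phi>1 \<phi>1s z t \<le> - K"
    proof (intro exI[of _ T] ballI allI impI)
      fix z t assume z: "z \<in> Zsp \<Omega> p \<phi>1s" and tT: "T \<le> \<bar>t\<bar>"
      define H where "H = htilde A bv c \<Omega> p f \<phi>1 \<phi>1s z t"
      have kk: "H * P \<le> ?l * t * P - (b * t * P - M * I)" "H * P \<le> ?l * t * P - (- M * I)"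
        using key[OF z, of t] unfolding H_def by auto
      have e1: "(?l * t - b * t + C) * P = ?l * t * P - (b * t * P - M * I)"
        using CP by (simp add: algebra_simps)
      have e2: "(?l * t + C) * P = ?l * t * P - (- M * I)"
        using CP by (simp add: algebra_simps)
      have h1: "H \<le> ?l * t - b * t + C"
      proof -
        have "H * P \<le> (?l * t - b * t + C) * P" using kk(1) e1 by linarith
        then show ?thesis using Ppos by (rule mult_right_le_imp_le)
      qed
      have h2: "H \<le> ?l * t + C"
      proof -
        have "H * P \<le> (?l * t + C) * P" using kk(2) e2 by linarith
        then show ?thesis using Ppos by (rule mult_right_le_imp_le)
      qed
      have "H \<le> - K"
      proof (cases "t \<ge> 0")
        case True
        then have "(K + C) / (b - ?l) \<le> t" using tT unfolding T_def by simp
        then have "K + C \<le> t * (b - ?l)" using b(1) by (simp add: pos_divide_le_eq)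
        then show ?thesis using h1 by (simp add: algebra_simps)
      next
        case False
        then have "(K + C) / ?l \<le> - t" using tT unfolding T_def by simp
        then have "K + C \<le> (- t) * ?l" using l1pos by (simp add: pos_divide_le_eq)
        then show ?thesis using h2 by (simp add: algebra_simps)
      qed
      then show "htilde A bv c \<Omega> p f \<phi>1 \<phi>1s z t \<le> - K" unfolding H_def .
    qed
  qed
qed

end
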